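(* Let $n\geqslant 2$ and let $F:(\mathbb{C}^N,0)\to M_{2,n}$ be a holomorphic map germ such that $X=F^{-1}(M^2_{2,n})\subset\mathbb{C}^N$ is an essentially isolated determinantal singularity (EIDS). Then the singular set $\Sigma X=F^{-1}(M^1_{2,n})=F^{-1}(0)$ of $X$ is an isolated complete intersection singularity (ICIS) in $\mathbb{C}^N$.
   Context: $M_{m,n}$ is the space of complex $m\times n$ matrices and $M^t_{m,n}=\{A:\operatorname{rank}A<t\}$; it has codimension $(m-t+1)(n-t+1)$ and a Whitney stratification by $M^i_{m,n}\setminus M^{i-1}_{m,n}$. $X=F^{-1}(M^t_{m,n})$ is determinantal of type $(m,n,t)$ if $\operatorname{codim}X=(m-t+1)(n-t+1)$. A point $x\in X$ is essentially nonsingular if $F$ is transversal at $x$ to the stratum $M^i_{m,n}\setminus M^{i-1}_{m,n}$ with $i=\operatorname{rank}F(x)+1$; $X$ is an EIDS if every point of $X$ in a punctured neighbourhood of $0$ is essentially nonsingular. *)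

theory Defs
  imports "HOL-Analysis.Analysis"
begin

definition holo_on :: "(complex^'N) set \<Rightarrow> (complex^'N \<Rightarrow> complex) \<Rightarrow> bool" where
  "holo_on U f \<longleftrightarrow> (\<forall>x\<in>U. \<exists>L. (f has_derivative L) (at x) \<and> (\<forall>c v. L (c *s v) = c * L v))"

definition holo_mat_on :: "(complex^'N) set \<Rightarrow> (complex^'N \<Rightarrow> complex^'n^'m) \<Rightarrow> bool" where
  "holo_mat_on U F \<longleftrightarrow> (\<forall>i j. holo_on U (\<lambda>x. F x $ i $ j))"

definition submersive_at :: "nat \<Rightarrow> (nat \<Rightarrow> complex^'N \<Rightarrow> complex) \<Rightarrow> complex^'N \<Rightarrow> bool" where
  "submersive_at k g x \<longleftrightarrow> (\<exists>D. (\<forall>i<k. (g i has_derivative D i) (at x)) \<and>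
      (\<forall>w::nat \<Rightarrow> complex. \<exists>v. \<forall>i<k. D i v = w i))"

text \<open>z is a regular point of A of complex dimension d: near z, A is a complex submanifold of
  dimension d, i.e. the zero set of a holomorphic submersion to C^(N-d).\<close>
definition regular_pt :: "(complex^'N) set \<Rightarrow> complex^'N \<Rightarrow> nat \<Rightarrow> bool" where
  "regular_pt A z d \<longleftrightarrow> z \<in> A \<and> d \<le> CARD('N) \<and>
     (\<exists>U \<phi>. open U \<and> z \<in> U \<and> (\<forall>i<CARD('N) - d. holo_on U (\<phi> i)) \<and>
        A \<inter> U = {w\<in>U. \<forall>i<CARD('N) - d. \<phi> i w = 0} \<and>
        (\<forall>w\<in>A \<inter> U. submersive_at (CARD('N) - d) \<phi> w))"

text \<open>Dimension of the germ of A at 0 (Chirka): lim sup of the dimensions at regular points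
  tending to 0.\<close>
definition germ_dim :: "(complex^'N) set \<Rightarrow> nat" where
  "germ_dim A = (LEAST m. \<exists>\<epsilon>>0. \<forall>z\<in>A \<inter> ball 0 \<epsilon>. \<forall>d. regular_pt A z d \<longrightarrow> d \<le> m)"

definition germ_codim :: "(complex^'N) set \<Rightarrow> nat" where
  "germ_codim A = CARD('N) - germ_dim A"

definition det_var :: "nat \<Rightarrow> (complex^'n^'m) set" where
  "det_var t = {A. rank A < t}"

text \<open>Tangent vectors to a set S at A: velocities at 0 of curves in S through A.
  For a submanifold (such as a rank stratum) this is its tangent space.\<close>
definition tangent_vecs :: "('a::real_normed_vector) set \<Rightarrow> 'a \<Rightarrow> 'a set" where
  "tangent_vecs S A = {v. \<exists>\<gamma>. \<gamma> 0 = A \<and> (\<forall>t. \<gamma> t \<in> S) \<and> (\<gamma> has_vector_derivative v) (at 0)}"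

definition transversal_at ::
  "(complex^'N \<Rightarrow> complex^'n^'m) \<Rightarrow> complex^'N \<Rightarrow> (complex^'n^'m) set \<Rightarrow> bool" where
  "transversal_at F x S \<longleftrightarrow>
     (\<exists>L. (F has_derivative L) (at x) \<and> {L u + v | u v. v \<in> tangent_vecs S (F x)} = UNIV)"

definition ess_nonsingular :: "(complex^'N \<Rightarrow> complex^'n^'m) \<Rightarrow> complex^'N \<Rightarrow> bool" where
  "ess_nonsingular F x \<longleftrightarrow>
     (let i = rank (F x) + 1 in transversal_at F x (det_var i - det_var (i - 1)))"

definition is_EIDS :: "(complex^'N) set \<Rightarrow> (complex^'N \<Rightarrow> complex^'n^'m) \<Rightarrow> nat \<Rightarrow> bool" where
  "is_EIDS U F t \<longleftrightarrow>
     (let X = {x\<in>U. F x \<in> det_var t} in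
       germ_codim X = (CARD('m) - t + 1) * (CARD('n) - t + 1) \<and>
       (\<exists>\<epsilon>>0. \<forall>x\<in>X \<inter> ball 0 \<epsilon> - {0}. ess_nonsingular F x))"

definition is_ICIS :: "(complex^'N) set \<Rightarrow> bool" where
  "is_ICIS V \<longleftrightarrow> (\<exists>k g \<epsilon>. \<epsilon> > 0 \<and> (\<forall>i<k. holo_on (ball 0 \<epsilon>) (g i) \<and> g i 0 = 0) \<and>
      V \<inter> ball 0 \<epsilon> = {x\<in>ball 0 \<epsilon>. \<forall>i<k. g i x = 0} \<and>
      germ_codim V = k \<and>
      (\<forall>x\<in>V \<inter> ball 0 \<epsilon> - {0}. submersive_at k g x))"

end

theory Submission
  imports Defs "HOL-Analysis.Analysis"
begin

lemma L_onto:
  fixes B :: "nat \<Rightarrow> 'a::euclidean_space \<Rightarrow> complex"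
  assumes lin: "\<And>i. linear (B i)"
  shows "subspace S \<Longrightarrow> (\<forall>w. \<exists>v\<in>S. \<forall>i<k. B i v = w i) \<Longrightarrow> 2*k \<le> dim S"
proof (induction k arbitrary: S)
  case 0
  then show ?case by simp
next
  case (Suc k)
  define S' where "S' = {v\<in>S. B k v = 0}"
  have sub': "subspace S'"
    unfolding S'_def using Suc.prems(1) lin[of k]
    by (auto simp: subspace_def linear_add linear_scale linear_0)
  have "\<forall>w. \<exists>v\<in>S'. \<forall>i<k. B i v = w i"
  proof
    fix w :: "nat \<Rightarrow> complex"
    obtain v where "v \<in> S" "\<forall>i<Suc k. B i v = (w(k:=0)) i" using Suc.prems(2) by blast
    then show "\<exists>v\<in>S'. \<forall>i<k. B i v = w i" unfolding S'_def
      by (intro bexI[of _ v]) auto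
  qed
  with Suc.IH sub' have IH: "2*k \<le> dim S'" by blast
  obtain a where a: "a \<in> S" "B k a = 1" using Suc.prems(2)[rule_format, of "\<lambda>_. 1"] by auto
  obtain b where b: "b \<in> S" "B k b = \<i>" using Suc.prems(2)[rule_format, of "\<lambda>_. \<i>"] by auto
  define T where "T = span {a, b}"
  have memT: "\<exists>\<alpha> \<beta>. x = \<alpha> *\<^sub>R a + \<beta> *\<^sub>R b" if "x \<in> T" for x
    using that unfolding T_def span_insert span_singleton
    by (auto simp: algebra_simps)
  have Bk: "B k (\<alpha> *\<^sub>R a + \<beta> *\<^sub>R b) = complex_of_real \<alpha> + complex_of_real \<beta> * \<i>" for \<alpha> \<beta>
    using lin[of k] a b by (simp add: linear_add linear_scale scaleR_conv_of_real)
  have ab: "a \<noteq> b" using a b by auto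
  have indep: "independent {a, b}"
  proof -
    have "b \<noteq> 0" using b lin[of k] by (auto simp: linear_0)
    moreover have "a \<notin> span {b}"
    proof
      assume "a \<in> span {b}"
      then obtain c where "a = c *\<^sub>R b" by (auto simp: span_singleton)
      then have "B k a = complex_of_real c * \<i>" using lin[of k] b by (simp add: linear_scale scaleR_conv_of_real)
      with a show False by (simp add: complex_eq_iff)
    qed
    ultimately show ?thesis using ab by (simp add: independent_insert)
  qed
  have dimT: "dim T = 2" unfolding T_def using indep ab dim_span_eq_card_independent[OF indep] by simp
  have int0: "S' \<inter> T = {0}"
  proof
    show "S' \<inter> T \<subseteq> {0}"
    proof
      fix x assume x: "x \<in> S' \<inter> T"
      then obtain \<alpha> \<beta> where xe: "x = \<alpha> *\<^sub>R a + \<beta> *\<^sub>R b" using memT by blast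
      have "B k x = 0" using x S'_def by auto
      then have "\<alpha> = 0 \<and> \<beta> = 0" using Bk[of \<alpha> \<beta>] xe by (simp add: complex_eq_iff)
      then show "x \<in> {0}" using xe by simp
    qed
    show "{0} \<subseteq> S' \<inter> T" using sub' by (auto simp: T_def span_zero subspace_0)
  qed
  have subT: "subspace T" unfolding T_def by simp
  have "dim {x + y |x y. x \<in> S' \<and> y \<in> T} + dim (S' \<inter> T) = dim S' + dim T"
    using dim_sums_Int[OF sub' subT] .
  moreover have "{x + y |x y. x \<in> S' \<and> y \<in> T} \<subseteq> S"
  proof -
    have "T \<subseteq> S" unfolding T_def using a b Suc.prems(1) by (simp add: span_minimal)
    then show ?thesis using Suc.prems(1) S'_def by (auto intro: subspace_add)
  qed
  moreover have "dim (S' \<inter> T) = 0" using int0 by simp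
  ultimately have "dim S' + 2 \<le> dim S" using dimT dim_subset[of "{x + y |x y. x \<in> S' \<and> y \<in> T}" S] by linarith
  then show ?case using IH by simp
qed
lemma L_cmp:
  fixes A B :: "nat \<Rightarrow> 'a::euclidean_space \<Rightarrow> complex"
  assumes linA: "\<And>i. linear (A i)" and linB: "\<And>i. linear (B i)"
    and ontoA: "\<forall>w. \<exists>v. \<forall>i<k'. A i v = w i"
    and ontoB: "\<forall>w. \<exists>v. \<forall>i<k. B i v = w i"
    and ker: "\<And>v. (\<forall>i<k'. A i v = 0) \<Longrightarrow> (\<forall>i<k. B i v = 0)"
  shows "k \<le> k'"
proof -
  have "\<forall>j. \<exists>p. \<forall>i<k'. A i p = (if i = j then 1 else 0)"
  proof
    fix j show "\<exists>p. \<forall>i<k'. A i p = (if i = j then 1 else 0)"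
      using spec[OF ontoA, of "\<lambda>i. if i = j then 1 else 0"] by simp
  qed
  then have "\<exists>p. \<forall>j. \<forall>i<k'. A i (p j) = (if i = j then 1 else 0)" by (rule choice)
  then obtain p where p0: "\<forall>j. \<forall>i<k'. A i (p j) = (if i = j then 1 else 0)" by blast
  have p: "\<And>j i. i < k' \<Longrightarrow> A i (p j) = (if i = j then 1 else 0)" using p0 by blast
  have "\<forall>j. \<exists>p. \<forall>i<k'. A i p = (if i = j then \<i> else 0)"
  proof
    fix j show "\<exists>p. \<forall>i<k'. A i p = (if i = j then \<i> else 0)"
      using spec[OF ontoA, of "\<lambda>i. if i = j then \<i> else 0"] by simp
  qed
  then have "\<exists>q. \<forall>j. \<forall>i<k'. A i (q j) = (if i = j then \<i> else 0)" by (rule choice)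
  then obtain q where q0: "\<forall>j. \<forall>i<k'. A i (q j) = (if i = j then \<i> else 0)" by blast
  have q: "\<And>j i. i < k' \<Longrightarrow> A i (q j) = (if i = j then \<i> else 0)" using q0 by blast
  define P where "P = p ` {..<k'} \<union> q ` {..<k'}"
  have finP: "finite P" unfolding P_def by simp
  have cardP: "card P \<le> 2 * k'"
  proof -
    have "card P \<le> card (p ` {..<k'}) + card (q ` {..<k'})" unfolding P_def by (rule card_Un_le)
    also have "\<dots> \<le> k' + k'" using card_image_le[of "{..<k'}" p] card_image_le[of "{..<k'}" q] by simp
    finally show ?thesis by simp
  qed
  have "\<forall>w. \<exists>v\<in>span P. \<forall>i<k. B i v = w i"
  proof
    fix w :: "nat \<Rightarrow> complex"
    obtain v0 where v0: "\<forall>i<k. B i v0 = w i" using ontoB by blast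
    define y where "y = (\<Sum>j<k'. Re (A j v0) *\<^sub>R p j + Im (A j v0) *\<^sub>R q j)"
    have yP: "y \<in> span P" unfolding y_def P_def
      by (intro span_sum span_add span_scale) (auto intro: span_base)
    have "A i y = A i v0" if "i < k'" for i
    proof -
      have "A i y = (\<Sum>j<k'. Re (A j v0) *\<^sub>R A i (p j) + Im (A j v0) *\<^sub>R A i (q j))"
        unfolding y_def using linA[of i] by (simp add: linear_sum linear_add linear_scale)
      also have "\<dots> = (\<Sum>j<k'. (if j = i then Re (A j v0) *\<^sub>R 1 + Im (A j v0) *\<^sub>R \<i> else 0))"
        using p q that by (intro sum.cong) auto
      also have "\<dots> = Re (A i v0) *\<^sub>R 1 + Im (A i v0) *\<^sub>R \<i>" using that by simp
      also have "\<dots> = A i v0" by (simp add: complex_eq_iff)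
      finally show ?thesis .
    qed
    then have "\<forall>i<k'. A i (v0 - y) = 0" using linA by (simp add: linear_diff)
    then have "\<forall>i<k. B i (v0 - y) = 0" by (rule ker)
    then have "\<forall>i<k. B i y = w i" using v0 linB by (simp add: linear_diff)
    then show "\<exists>v\<in>span P. \<forall>i<k. B i v = w i" using yP by blast
  qed
  then have "2 * k \<le> dim (span P)"
    by (intro L_onto[of B "span P" k]) (simp_all add: linB subspace_span)
  also have "\<dots> \<le> card P" using finP by (simp add: dim_span dim_le_card')
  finally show ?thesis using cardP by simp
qed
lemma has_derivative_vec_lambda':
  fixes f :: "'a::euclidean_space \<Rightarrow> 'b::real_normed_vector^'n"
  assumes d: "\<And>j. ((\<lambda>x. f x $ j) has_derivative (\<lambda>h. f' h $ j)) (at a within s)"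
  shows "(f has_derivative f') (at a within s)"
proof -
  have "linear f'"
  proof (rule linearI)
    fix x y show "f' (x + y) = f' x + f' y"
    proof -
      have "\<And>j. f' (x + y) $ j = f' x $ j + f' y $ j"
        using linear_add[OF has_derivative_linear[OF d]] by blast
      then show ?thesis by (simp add: vec_eq_iff)
    qed
  next
    fix c :: real and x show "f' (c *\<^sub>R x) = c *\<^sub>R f' x"
    proof -
      have "\<And>j. f' (c *\<^sub>R x) $ j = c *\<^sub>R (f' x $ j)"
        using linear_scale[OF has_derivative_linear[OF d]] by blast
      then show ?thesis by (simp add: vec_eq_iff)
    qed
  qed
  then have bl: "bounded_linear f'" by (simp add: linear_conv_bounded_linear)
  have "((\<lambda>y. ((f y - f a) - f' (y - a)) /\<^sub>R norm (y - a)) \<longlongrightarrow> 0) (at a within s)"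
  proof (rule vec_tendstoI)
    fix j
    have "((\<lambda>y. ((f y $ j - f a $ j) - f' (y - a) $ j) /\<^sub>R norm (y - a)) \<longlongrightarrow> 0) (at a within s)"
      using d[of j] by (simp add: has_derivative_at_within)
    then show "((\<lambda>y. (((f y - f a) - f' (y - a)) /\<^sub>R norm (y - a)) $ j) \<longlongrightarrow> 0 $ j) (at a within s)"
      by simp
  qed
  with bl show ?thesis by (simp add: has_derivative_at_within)
qed
lemma find_point:
  fixes \<psi> :: "nat \<Rightarrow> complex^'N \<Rightarrow> complex" and \<chi>0 :: "complex^'N \<Rightarrow> real"
  assumes S: "open S" "z \<in> S"
   and kN: "k' \<le> CARD('N)"
   and cont: "\<And>i. i < k' \<Longrightarrow> continuous_on S (\<psi> i)" "continuous_on S \<chi>0"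
   and der: "\<And>i. i < k' \<Longrightarrow> (\<psi> i has_derivative A i) (at z)" "(\<chi>0 has_derivative C) (at z)"
   and z0: "\<And>i. i < k' \<Longrightarrow> \<psi> i z = 0" "\<chi>0 z = 0"
   and onto: "\<forall>w. \<exists>v. \<forall>i<k'. A i v = w i"
   and v0: "\<And>i. i < k' \<Longrightarrow> A i v0 = 0" "C v0 \<noteq> 0"
   and e: "e > 0"
  shows "\<exists>w\<in>S. dist w z < e \<and> (\<forall>i<k'. \<psi> i w = 0) \<and> \<chi>0 w \<noteq> 0"
proof -
  have linA: "linear (A i)" if "i < k'" for i using der(1)[OF that] has_derivative_linear by blast
  have linC: "linear C" using der(2) has_derivative_linear by blast
  obtain h where h: "bij_betw h {0..<CARD('N)} (UNIV::'N set)"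
    using ex_bij_betw_nat_finite[of "UNIV::'N set"] by auto
  define idx where "idx = inv_into {0..<CARD('N)} h"
  have idx1: "idx j < CARD('N)" "h (idx j) = j" for j
  proof -
    have "j \<in> h ` {0..<CARD('N)}" using h unfolding bij_betw_def by auto
    then show "idx j < CARD('N)" "h (idx j) = j" unfolding idx_def
      using inv_into_into[of j h "{0..<CARD('N)}"] f_inv_into_f[of j h "{0..<CARD('N)}"] by auto
  qed
  have idx2: "idx (h i) = i" if "i < CARD('N)" for i
    using h that unfolding idx_def bij_betw_def by (auto intro: inv_into_f_f)
  have "\<forall>j. \<exists>p. \<forall>i<k'. A i p = (if i = j then 1 else 0)"
  proof
    fix j show "\<exists>p. \<forall>i<k'. A i p = (if i = j then 1 else 0)"
      using spec[OF onto, of "\<lambda>i. if i = j then 1 else 0"] by simp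
  qed
  then have "\<exists>p. \<forall>j. \<forall>i<k'. A i (p j) = (if i = j then 1 else 0)" by (rule choice)
  then obtain p where p0: "\<forall>j. \<forall>i<k'. A i (p j) = (if i = j then 1 else 0)" by blast
  have p: "\<And>j i. i < k' \<Longrightarrow> A i (p j) = (if i = j then 1 else 0)" using p0 by blast
  have "\<forall>j. \<exists>p. \<forall>i<k'. A i p = (if i = j then \<i> else 0)"
  proof
    fix j show "\<exists>p. \<forall>i<k'. A i p = (if i = j then \<i> else 0)"
      using spec[OF onto, of "\<lambda>i. if i = j then \<i> else 0"] by simp
  qed
  then have "\<exists>q. \<forall>j. \<forall>i<k'. A i (q j) = (if i = j then \<i> else 0)" by (rule choice)
  then obtain q where q0: "\<forall>j. \<forall>i<k'. A i (q j) = (if i = j then \<i> else 0)" by blast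
  have q: "\<And>j i. i < k' \<Longrightarrow> A i (q j) = (if i = j then \<i> else 0)" using q0 by blast
  define y0 where "y0 y = (\<Sum>m<k'. Re (y $ h m) *\<^sub>R p m + Im (y $ h m) *\<^sub>R q m)" for y :: "complex^'N"
  have Ay0: "A i (y0 y) = y $ h i" if "i < k'" for i y
  proof -
    have "A i (y0 y) = (\<Sum>m<k'. Re (y $ h m) *\<^sub>R A i (p m) + Im (y $ h m) *\<^sub>R A i (q m))"
      unfolding y0_def using linA[OF that] by (simp add: linear_sum linear_add linear_scale)
    also have "\<dots> = (\<Sum>m<k'. (if m = i then Re (y $ h m) *\<^sub>R 1 + Im (y $ h m) *\<^sub>R \<i> else 0))"
      using p q that by (intro sum.cong) auto
    also have "\<dots> = Re (y $ h i) *\<^sub>R 1 + Im (y $ h i) *\<^sub>R \<i>" using that by simp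
    also have "\<dots> = y $ h i" by (simp add: complex_eq_iff)
    finally show ?thesis .
  qed
  have liny0: "linear y0"
  proof (rule linearI)
    fix a b show "y0 (a + b) = y0 a + y0 b"
      unfolding y0_def by (simp add: sum.distrib scaleR_add_left algebra_simps)
  next
    fix c :: real and a show "y0 (c *\<^sub>R a) = c *\<^sub>R y0 a"
      unfolding y0_def by (simp add: scaleR_sum_right scaleR_add_right)
  qed
  define cc where "cc = C v0"
  have cc: "cc \<noteq> 0" using v0 cc_def by simp
  define G where "G x = ((\<chi> j. if idx j < k' then \<psi> (idx j) (fst x) else snd x $ j), \<chi>0 (fst x))"
    for x :: "(complex^'N) \<times> (complex^'N)"
  define G' where "G' x = ((\<chi> j. if idx j < k' then A (idx j) (fst x) else snd x $ j), C (fst x))"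
    for x :: "(complex^'N) \<times> (complex^'N)"
  define g' where "g' yr = (y0 (fst yr) + ((snd yr - C (y0 (fst yr))) / cc) *\<^sub>R v0,
       (\<chi> j. if idx j < k' then 0 else fst yr $ j))" for yr :: "(complex^'N) \<times> real"
  have "linear g'"
  proof (rule linearI)
    fix a b :: "(complex^'N) \<times> real"
    show "g' (a + b) = g' a + g' b"
    proof -
      have e1: "y0 (fst a + fst b) = y0 (fst a) + y0 (fst b)" using linear_add[OF liny0] by blast
      have e2: "C (y0 (fst a) + y0 (fst b)) = C (y0 (fst a)) + C (y0 (fst b))" using linear_add[OF linC] by blast
      show ?thesis unfolding g'_def
        by (simp add: e1 e2 vec_eq_iff add_divide_distrib diff_divide_distrib scaleR_add_left scaleR_diff_left algebra_simps)
    qed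
  next
    fix c :: real and a :: "(complex^'N) \<times> real"
    show "g' (c *\<^sub>R a) = c *\<^sub>R g' a"
    proof -
      have e1: "y0 (c *\<^sub>R fst a) = c *\<^sub>R y0 (fst a)" using linear_scale[OF liny0] by blast
      have e2: "C (c *\<^sub>R y0 (fst a)) = c * C (y0 (fst a))" using linear_scale[OF linC] by simp
      show ?thesis unfolding g'_def
        by (simp add: e1 e2 vec_eq_iff diff_divide_distrib scaleR_diff_left algebra_simps)
    qed
  qed
  then have blg: "bounded_linear g'" by (simp add: linear_conv_bounded_linear)
  have inv: "G' \<circ> g' = id"
  proof
    fix yr :: "(complex^'N) \<times> real"
    obtain y r where yr: "yr = (y, r)" by fastforce
    have "A (idx j) (y0 y + ((r - C (y0 y)) / cc) *\<^sub>R v0) = y $ j" if "idx j < k'" for j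
      using linear_add[OF linA[OF that]] linear_scale[OF linA[OF that]] Ay0[OF that] v0(1)[OF that] idx1[of j]
      by simp
    moreover have "C (y0 y + ((r - C (y0 y)) / cc) *\<^sub>R v0) = r"
      using linear_add[OF linC] linear_scale[OF linC] cc unfolding cc_def by simp
    ultimately show "(G' \<circ> g') yr = id yr"
      unfolding yr G'_def g'_def by (simp add: vec_eq_iff)
  qed
  obtain r where r: "r > 0" "ball z r \<subseteq> S" using S openE by blast
  define e' where "e' = min e r"
  have e': "e' > 0" using e r e'_def by simp
  define T where "T = ball (z, 0::complex^'N) e'"
  have TS: "T \<subseteq> S \<times> UNIV"
  proof
    fix x assume "x \<in> T"
    then have "dist (fst x) z < e'" using dist_fst_le[of x "(z,0)"] unfolding T_def by (simp add: dist_commute)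
    then have "fst x \<in> ball z r" using e'_def by (simp add: dist_commute)
    then show "x \<in> S \<times> UNIV" using r by (cases x) auto
  qed
  have contG: "continuous_on (S \<times> UNIV) G"
    unfolding G_def
  proof (intro continuous_intros)
    fix j
    show "continuous_on (S \<times> UNIV) (\<lambda>x. if idx j < k' then \<psi> (idx j) (fst x) else snd x $ j)"
    proof (cases "idx j < k'")
      case True
      have "continuous_on (S \<times> UNIV) (\<psi> (idx j) \<circ> fst)"
        by (rule continuous_on_compose) (auto intro: continuous_on_fst continuous_on_subset[OF cont(1)[OF True]] continuous_intros)
      then show ?thesis using True by (simp add: o_def)
    next
      case False then show ?thesis by (simp add: continuous_intros)
    qed
  next
    have "continuous_on (S \<times> UNIV) (\<chi>0 \<circ> fst)"
      by (rule continuous_on_compose) (auto intro: continuous_on_subset[OF cont(2)] continuous_intros)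
    then show "continuous_on (S \<times> UNIV) (\<lambda>x. \<chi>0 (fst x))" by (simp add: o_def)
  qed
  have derG: "(G has_derivative G') (at (z, 0))"
    unfolding G_def G'_def
  proof (intro has_derivative_Pair has_derivative_vec_lambda')
    fix j
    show "((\<lambda>x. (\<chi> j. if idx j < k' then \<psi> (idx j) (fst x) else snd x $ j) $ j) has_derivative
          (\<lambda>h. (\<chi> j. if idx j < k' then A (idx j) (fst h) else snd h $ j) $ j)) (at (z, 0))"
    proof (cases "idx j < k'")
      case True
      have "((\<psi> (idx j) \<circ> fst) has_derivative (A (idx j) \<circ> fst)) (at (z, 0::complex^'N))"
        by (rule diff_chain_at) (auto intro: has_derivative_fst has_derivative_ident der(1)[OF True])
      then show ?thesis using True by (simp add: o_def)
    next
      case False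
      have "bounded_linear (\<lambda>x::(complex^'N) \<times> (complex^'N). snd x $ j)"
        using bounded_linear_compose[OF bounded_linear_vec_nth[of j] bounded_linear_snd] by (simp add: o_def)
      then have "((\<lambda>x::(complex^'N) \<times> (complex^'N). snd x $ j) has_derivative (\<lambda>h. snd h $ j)) (at (z, 0))"
        by (rule bounded_linear_imp_has_derivative)
      then show ?thesis using False by simp
    qed
  next
    have "((\<chi>0 \<circ> fst) has_derivative (C \<circ> fst)) (at (z, 0::complex^'N))"
      by (rule diff_chain_at) (auto intro: has_derivative_fst has_derivative_ident der(2))
    then show "((\<lambda>x. \<chi>0 (fst x)) has_derivative (\<lambda>h. C (fst h))) (at (z, 0::complex^'N))" by (simp add: o_def)
  qed
  have "G (z, 0) \<in> interior (G ` T)"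
    by (rule sussmann_open_mapping[OF _ contG _ derG blg inv TS])
       (auto simp: T_def e' S open_Times)
  moreover have "G (z, 0) = (0, 0)" unfolding G_def using z0 by (simp add: vec_eq_iff)
  ultimately obtain \<epsilon> where \<epsilon>: "\<epsilon> > 0" "ball (0, 0) \<epsilon> \<subseteq> G ` T" by (metis mem_interior)
  have "(0, \<epsilon>/2) \<in> ball (0::complex^'N, 0::real) \<epsilon>" using \<epsilon> by (simp add: dist_Pair_Pair)
  then obtain x where x: "x \<in> T" "G x = (0, \<epsilon>/2)" using \<epsilon> by (metis (no_types, lifting) imageE subsetD)
  define w where "w = fst x"
  have wS: "w \<in> S" using x TS w_def by auto
  have "dist w z < e'" using dist_fst_le[of x "(z,0)"] x unfolding T_def w_def by (simp add: dist_commute)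
  then have dw: "dist w z < e" using e'_def by simp
  have "\<psi> i w = 0" if "i < k'" for i
  proof -
    have "fst (G x) $ h i = 0" using x by simp
    moreover have "idx (h i) = i" using idx2 that kN by simp
    ultimately show ?thesis using that unfolding G_def w_def by simp
  qed
  moreover have "\<chi>0 w \<noteq> 0" using x \<epsilon> unfolding G_def w_def by simp
  ultimately show ?thesis using wS dw by blast
qed
lemma holo_cont: "holo_on U f \<Longrightarrow> continuous_on U f"
  unfolding holo_on_def
  by (meson continuous_at_imp_continuous_on has_derivative_continuous)

lemma submersive_le:
  fixes g :: "nat \<Rightarrow> complex^'N \<Rightarrow> complex"
  assumes "submersive_at k g x" shows "k \<le> CARD('N)"
proof -
  obtain D where D: "\<forall>i<k. (g i has_derivative D i) (at x)" "\<forall>w::nat \<Rightarrow> complex. \<exists>v. \<forall>i<k. D i v = w i"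
    using assms unfolding submersive_at_def by blast
  define D' where "D' i = (if i < k then D i else (\<lambda>_. 0))" for i
  have lin: "linear (D' i)" for i
    using D(1) unfolding D'_def by (auto intro: has_derivative_linear linear_zero)
  have "\<forall>w. \<exists>v\<in>(UNIV::(complex^'N) set). \<forall>i<k. D' i v = w i" using D(2) unfolding D'_def by simp
  then have "2 * k \<le> dim (UNIV::(complex^'N) set)"
    by (intro L_onto[of D' UNIV k]) (simp_all add: lin)
  also have "\<dots> = CARD('N) * 2" by simp
  finally show ?thesis by simp
qed

lemma regular_core:
  fixes A :: "(complex^'N) set"
  assumes r1: "regular_pt A z d" and r2: "regular_pt A z d'"
  shows "CARD('N) - d \<le> CARD('N) - d'"
proof (rule ccontr)
  define k where "k = CARD('N) - d"
  define k' where "k' = CARD('N) - d'"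
  assume "\<not> CARD('N) - d \<le> CARD('N) - d'"
  then have kk: "k' < k" unfolding k_def k'_def by simp
  obtain U1 \<phi> where U1: "open U1" "z \<in> U1" "\<forall>i<k. holo_on U1 (\<phi> i)"
      "A \<inter> U1 = {w\<in>U1. \<forall>i<k. \<phi> i w = 0}" "\<forall>w\<in>A \<inter> U1. submersive_at k \<phi> w"
    and zA: "z \<in> A"
    using r1 unfolding regular_pt_def k_def by blast
  obtain U2 \<psi> where U2: "open U2" "z \<in> U2" "\<forall>i<k'. holo_on U2 (\<psi> i)"
      "A \<inter> U2 = {w\<in>U2. \<forall>i<k'. \<psi> i w = 0}" "\<forall>w\<in>A \<inter> U2. submersive_at k' \<psi> w"
    using r2 unfolding regular_pt_def k'_def by blast
  obtain B where B: "\<forall>i<k. (\<phi> i has_derivative B i) (at z)" "\<forall>w::nat \<Rightarrow> complex. \<exists>v. \<forall>i<k. B i v = w i"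
    using U1(5) zA U1(2) unfolding submersive_at_def by blast
  obtain Ad where Ad: "\<forall>i<k'. (\<psi> i has_derivative Ad i) (at z)" "\<forall>w::nat \<Rightarrow> complex. \<exists>v. \<forall>i<k'. Ad i v = w i"
    using U2(5) zA U2(2) unfolding submersive_at_def by blast
  define B' where "B' i = (if i < k then B i else (\<lambda>_. 0))" for i
  define A' where "A' i = (if i < k' then Ad i else (\<lambda>_. 0))" for i
  have linB: "linear (B' i)" for i
    using B(1) unfolding B'_def by (auto intro: has_derivative_linear linear_zero)
  have linA: "linear (A' i)" for i
    using Ad(1) unfolding A'_def by (auto intro: has_derivative_linear linear_zero)
  have "\<not> (\<forall>v. (\<forall>i<k'. A' i v = 0) \<longrightarrow> (\<forall>i<k. B' i v = 0))"
  proof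
    assume ker: "\<forall>v. (\<forall>i<k'. A' i v = 0) \<longrightarrow> (\<forall>i<k. B' i v = 0)"
    have "k \<le> k'"
      by (rule L_cmp[of A' B' k' k]) (use linA linB Ad(2) B(2) ker in \<open>simp_all add: A'_def B'_def\<close>)
    with kk show False by simp
  qed
  then obtain v0 i0 where v0: "\<forall>i<k'. Ad i v0 = 0" "i0 < k" "B i0 v0 \<noteq> 0"
    unfolding A'_def B'_def by auto
  define c where "c = cnj (B i0 v0)"
  define \<chi>0 where "\<chi>0 w = Re (c * \<phi> i0 w)" for w
  define C where "C v = Re (c * B i0 v)" for v
  have Cv0: "C v0 \<noteq> 0"
  proof -
    have "C v0 = (Re (B i0 v0))\<^sup>2 + (Im (B i0 v0))\<^sup>2" unfolding C_def c_def by (simp add: power2_eq_square)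
    moreover have "Re (B i0 v0) \<noteq> 0 \<or> Im (B i0 v0) \<noteq> 0" using v0(3) by (simp add: complex_eq_iff)
    ultimately show ?thesis by (simp add: sum_power2_eq_zero_iff)
  qed
  have derchi: "(\<chi>0 has_derivative C) (at z)"
  proof -
    have "((\<lambda>w. c * \<phi> i0 w) has_derivative (\<lambda>v. c * B i0 v)) (at z)"
      using B(1) v0(2) by (intro has_derivative_mult_right) auto
    then show ?thesis unfolding \<chi>0_def C_def
      using bounded_linear.has_derivative[OF bounded_linear_Re] by blast
  qed
  have contpsi: "continuous_on (U1 \<inter> U2) (\<psi> i)" if "i < k'" for i
    using holo_cont U2(3) that continuous_on_subset by blast
  have contchi: "continuous_on (U1 \<inter> U2) \<chi>0"
  proof -
    have "continuous_on (U1 \<inter> U2) (\<phi> i0)"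
      using holo_cont U1(3) v0(2) continuous_on_subset by blast
    then show ?thesis unfolding \<chi>0_def by (intro continuous_intros)
  qed
  have z0: "\<psi> i z = 0" if "i < k'" for i using U2(4) zA U2(2) that by blast
  have "\<phi> i0 z = 0" using U1(4) zA U1(2) v0(2) by blast
  then have zchi: "\<chi>0 z = 0" unfolding \<chi>0_def by simp
  have "\<exists>w\<in>U1 \<inter> U2. dist w z < 1 \<and> (\<forall>i<k'. \<psi> i w = 0) \<and> \<chi>0 w \<noteq> 0"
    by (rule find_point[where A=Ad and C=C])
       (use U1(1,2) U2(1,2) contpsi contchi Ad derchi z0 zchi v0(1) Cv0 k'_def in auto)
  then obtain w where w: "w \<in> U1 \<inter> U2" "\<forall>i<k'. \<psi> i w = 0" "\<chi>0 w \<noteq> 0" by blast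
  then have "w \<in> A" using U2(4) by blast
  then have "\<phi> i0 w = 0" using U1(4) w(1) v0(2) by blast
  then show False using w(3) unfolding \<chi>0_def by simp
qed

lemma regular_unique:
  fixes A :: "(complex^'N) set"
  assumes "regular_pt A z d" "regular_pt A z d'"
  shows "d = d'"
  using regular_core[OF assms(1,2)] regular_core[OF assms(2,1)] assms
  unfolding regular_pt_def by linarith

lemma rank_lt1: "rank (A::complex^'n^'m) < 1 \<longleftrightarrow> A = 0"
proof -
  have "rank A < 1 \<longleftrightarrow> vec.dim (rows A) = 0" by (simp add: row_rank_def_gen)
  also have "\<dots> \<longleftrightarrow> rows A \<subseteq> {0}" by (rule vec.dim_eq_0)
  also have "\<dots> \<longleftrightarrow> A = 0"
  proof
    assume h: "rows A \<subseteq> {0}"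
    have "A $ i = 0" for i
    proof -
      have "row i A \<in> rows A" unfolding rows_def by blast
      then have "row i A = 0" using h by blast
      then show ?thesis by (simp add: row_def vec_eq_iff)
    qed
    then show "A = 0" by (simp add: vec_eq_iff)
  next
    assume "A = 0" then show "rows A \<subseteq> {0}" by (auto simp: rows_def row_def vec_eq_iff)
  qed
  finally show ?thesis .
qed

lemma entry_deriv:
  fixes F :: "'a::real_normed_vector \<Rightarrow> 'c::real_normed_vector^'n^'m"
  assumes "(F has_derivative L) (at x)"
  shows "((\<lambda>x. F x $ a $ b) has_derivative (\<lambda>h. L h $ a $ b)) (at x)"
proof -
  have bl: "bounded_linear (\<lambda>M::'c^'n^'m. M $ a $ b)"
    using bounded_linear_compose[OF bounded_linear_vec_nth[of b] bounded_linear_vec_nth[of a]] by (simp add: o_def)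
  show ?thesis using bounded_linear.has_derivative[OF bl assms] by simp
qed

lemma holo_subset: "holo_on U f \<Longrightarrow> S \<subseteq> U \<Longrightarrow> holo_on S f"
  unfolding holo_on_def by blast

lemma holo_coord: "holo_on S (\<lambda>x::complex^'N. x $ j)"
  unfolding holo_on_def
  by (intro ballI exI[of _ "\<lambda>h. h $ j"] conjI bounded_linear_imp_has_derivative bounded_linear_vec_nth) simp

lemma tangent_zero: "tangent_vecs {0::'a::real_normed_vector} 0 = {0}"
proof
  show "tangent_vecs {0::'a} 0 \<subseteq> {0}"
  proof
    fix v assume "v \<in> tangent_vecs {0::'a} 0"
    then obtain \<gamma> where g: "\<forall>t. \<gamma> t \<in> {0::'a}" "(\<gamma> has_vector_derivative v) (at 0)"
      unfolding tangent_vecs_def by blast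
    have "\<gamma> = (\<lambda>_. 0)" using g(1) by auto
    then have "((\<lambda>_. 0::'a) has_vector_derivative v) (at 0)" using g(2) by simp
    then have "v = 0" using vector_derivative_unique_at has_vector_derivative_const by blast
    then show "v \<in> {0}" by simp
  qed
  show "{0} \<subseteq> tangent_vecs {0::'a} 0"
    unfolding tangent_vecs_def by (auto intro!: exI[of _ "\<lambda>_. 0"] has_vector_derivative_const)
qed

lemma germ_dim_eq:
  assumes "\<epsilon> > 0" "\<forall>z\<in>A \<inter> ball 0 \<epsilon>. \<forall>d. regular_pt A z d \<longrightarrow> d \<le> m"
    and "\<forall>\<epsilon>>0. \<exists>z\<in>A \<inter> ball 0 \<epsilon>. regular_pt A z m"
  shows "germ_dim A = m"
  unfolding germ_dim_def
proof (rule Least_equality)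
  show "\<exists>\<epsilon>>0. \<forall>z\<in>A \<inter> ball 0 \<epsilon>. \<forall>d. regular_pt A z d \<longrightarrow> d \<le> m" using assms(1,2) by blast
next
  fix y assume "\<exists>\<epsilon>>0. \<forall>z\<in>A \<inter> ball 0 \<epsilon>. \<forall>d. regular_pt A z d \<longrightarrow> d \<le> y"
  then obtain e where "e > 0" "\<forall>z\<in>A \<inter> ball 0 e. \<forall>d. regular_pt A z d \<longrightarrow> d \<le> y" by blast
  moreover obtain z where "z \<in> A \<inter> ball 0 e" "regular_pt A z m" using assms(3) \<open>e > 0\<close> by blast
  ultimately show "m \<le> y" by blast
qed

lemma rank_eq0: "rank (A::complex^'n^'m) = 0 \<longleftrightarrow> A = 0"
  using rank_lt1[of A] by linarith

lemma regular_of: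
  fixes V :: "(complex^'N) set"
  assumes "open U'" "z \<in> V \<inter> U'" "\<forall>i<k. holo_on U' (g i)"
    "V \<inter> U' = {w\<in>U'. \<forall>i<k. g i w = 0}" "\<forall>w\<in>V \<inter> U'. submersive_at k g w" "k \<le> CARD('N)"
  shows "regular_pt V z (CARD('N) - k)"
  unfolding regular_pt_def
  using assms by (intro conjI exI[of _ U'] exI[of _ g]) auto

lemma regular_nbhd:
  fixes A :: "(complex^'N) set"
  assumes "regular_pt A z d"
  shows "\<exists>U'. open U' \<and> z \<in> U' \<and> (\<forall>w\<in>A \<inter> U'. regular_pt A w d)"
proof -
  obtain U' \<phi> where U': "open U'" "z \<in> U'" "\<forall>i<CARD('N) - d. holo_on U' (\<phi> i)"
        "A \<inter> U' = {w\<in>U'. \<forall>i<CARD('N) - d. \<phi> i w = 0}"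
        "\<forall>w\<in>A \<inter> U'. submersive_at (CARD('N) - d) \<phi> w" "d \<le> CARD('N)"
    using assms unfolding regular_pt_def by blast
  have "\<forall>w\<in>A \<inter> U'. regular_pt A w d"
    unfolding regular_pt_def using U' by (intro ballI conjI exI[of _ U'] exI[of _ \<phi>]) auto
  then show ?thesis using U' by blast
qed

theorem mainTheorem2:
  fixes F :: "complex^'N \<Rightarrow> complex^'n^2" and U :: "(complex^'N) set"
  assumes "CARD('n) \<ge> 2"
    and "open U" and "0 \<in> U" and "holo_mat_on U F" and "F 0 = 0"
    and "is_EIDS U F 2"
  shows "{x\<in>U. F x \<in> det_var 1} = {x\<in>U. F x = 0} \<and> is_ICIS {x\<in>U. F x = 0}"
proof
  show part1: "{x\<in>U. F x \<in> det_var 1} = {x\<in>U. F x = 0}"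
    by (auto simp: det_var_def rank_eq0)
  define V where "V = {x\<in>U. F x = 0}"
  obtain \<epsilon>0 where e0: "\<epsilon>0 > 0" "\<forall>x\<in>{x\<in>U. F x \<in> det_var 2} \<inter> ball 0 \<epsilon>0 - {0}. ess_nonsingular F x"
    using assms(6) unfolding is_EIDS_def Let_def by blast
  obtain r where r: "r > 0" "ball 0 r \<subseteq> U" using assms(2,3) openE by blast
  define \<epsilon>2 where "\<epsilon>2 = min \<epsilon>0 r"
  have e2: "\<epsilon>2 > 0" "ball 0 \<epsilon>2 \<subseteq> U" using e0 r \<epsilon>2_def by auto
  have V0: "0 \<in> V" using assms(3,5) V_def by simp
  have surjL: "\<exists>L. (F has_derivative L) (at x) \<and> (\<forall>M. \<exists>u. L u = M)"
    if x: "x \<in> V \<inter> ball 0 \<epsilon>2 - {0}" for x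
  proof -
    have Fx: "F x = 0" "x \<in> U" using x V_def by auto
    have r0: "rank (F x) = 0" using rank_eq0[of "F x"] Fx by simp
    have "F x \<in> det_var 2" using r0 by (simp add: det_var_def)
    moreover have "x \<in> ball 0 \<epsilon>0" using x \<epsilon>2_def by auto
    ultimately have "ess_nonsingular F x" using e0(2) x Fx by blast
    moreover have "det_var 1 - det_var 0 = {0::complex^'n^2}"
      by (auto simp: det_var_def rank_eq0)
    ultimately have "transversal_at F x {0}" unfolding ess_nonsingular_def Let_def r0 by simp
    then obtain L where L: "(F has_derivative L) (at x)" "{L u + v | u v. v \<in> tangent_vecs {0} (F x)} = UNIV"
      unfolding transversal_at_def by blast
    have "\<forall>M. \<exists>u. L u = M"
    proof
      fix M
      have "M \<in> {L u + v | u v. v \<in> tangent_vecs {0} (F x)}" using L(2) by blast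
      then obtain u v where "M = L u + v" "v \<in> tangent_vecs {0} (F x)" by blast
      moreover have "tangent_vecs {0} (F x) = {0}" using Fx tangent_zero by simp
      ultimately show "\<exists>u. L u = M" by auto
    qed
    then show ?thesis using L(1) by blast
  qed
  show "is_ICIS V"
  proof (cases "\<exists>\<epsilon>1>0. \<forall>z\<in>V \<inter> ball 0 \<epsilon>1. z = 0")
    case True
    then obtain \<epsilon>1 where e1: "\<epsilon>1 > 0" "\<forall>z\<in>V \<inter> ball 0 \<epsilon>1. z = 0" by blast
    define \<epsilon> where "\<epsilon> = min \<epsilon>1 r"
    have e: "\<epsilon> > 0" using e1 r \<epsilon>_def by simp
    have Vb: "V \<inter> ball 0 \<epsilon> = {0}" using e1 e V0 \<epsilon>_def by auto
    obtain cN where cN: "bij_betw cN {0..<CARD('N)} (UNIV::'N set)"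
      using ex_bij_betw_nat_finite[of "UNIV::'N set"] by auto
    define g where "g i x = x $ cN i" for i and x :: "complex^'N"
    have hg: "holo_on S (g i)" for S i
    proof -
      have "g i = (\<lambda>x. x $ cN i)" by (rule ext) (simp add: g_def)
      then show ?thesis by (simp add: holo_coord)
    qed
    have coord0: "x = 0" if "\<forall>i<CARD('N). g i x = 0" for x
    proof -
      have "x $ j = 0" for j
      proof -
        have "j \<in> cN ` {0..<CARD('N)}" using cN unfolding bij_betw_def by blast
        then obtain i where "i < CARD('N)" "cN i = j" by auto
        then show ?thesis using that g_def by auto
      qed
      then show ?thesis by (simp add: vec_eq_iff)
    qed
    have subm0: "submersive_at (CARD('N)) g 0"
      unfolding submersive_at_def
    proof (intro exI[of _ "\<lambda>i h. h $ cN i"] conjI)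
      show "\<forall>i<CARD('N). (g i has_derivative (\<lambda>h. h $ cN i)) (at 0)"
        unfolding g_def by (auto intro: bounded_linear_imp_has_derivative)
      show "\<forall>w::nat \<Rightarrow> complex. \<exists>v. \<forall>i<CARD('N). v $ cN i = w i"
      proof
      fix w :: "nat \<Rightarrow> complex"
      define v where "v = (\<chi> j. w (inv_into {0..<CARD('N)} cN j))"
      have "\<forall>i<CARD('N). v $ cN i = w i"
        using cN unfolding v_def bij_betw_def by (auto simp: inv_into_f_f)
      then show "\<exists>v. \<forall>i<CARD('N). v $ cN i = w i" by blast
      qed
    qed
    have reg00: "regular_pt V 0 0"
    proof -
      have "regular_pt V 0 (CARD('N) - CARD('N))"
      proof (rule regular_of[where U'="ball 0 \<epsilon>" and g=g])
        show "V \<inter> ball 0 \<epsilon> = {w \<in> ball 0 \<epsilon>. \<forall>i<CARD('N). g i w = 0}"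
          using Vb coord0 e by (auto simp: g_def)
        show "\<forall>w\<in>V \<inter> ball 0 \<epsilon>. submersive_at CARD('N) g w" using Vb subm0 by auto
      qed (use e V0 hg in auto)
      then show ?thesis by simp
    qed
    have gd: "germ_dim V = 0"
    proof (rule germ_dim_eq[OF e])
      show "\<forall>z\<in>V \<inter> ball 0 \<epsilon>. \<forall>d. regular_pt V z d \<longrightarrow> d \<le> 0"
        using Vb regular_unique[OF _ reg00] by auto
      show "\<forall>\<epsilon>>0. \<exists>z\<in>V \<inter> ball 0 \<epsilon>. regular_pt V z 0"
        using reg00 V0 by auto
    qed
    show ?thesis
      unfolding is_ICIS_def
    proof (intro exI[of _ "CARD('N)"] exI[of _ g] exI[of _ \<epsilon>] conjI)
      show "\<forall>i<CARD('N). holo_on (ball 0 \<epsilon>) (g i) \<and> g i 0 = 0" by (auto simp: g_def hg)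
      show "V \<inter> ball 0 \<epsilon> = {x \<in> ball 0 \<epsilon>. \<forall>i<CARD('N). g i x = 0}"
        using Vb coord0 e by (auto simp: g_def)
      show "germ_codim V = CARD('N)" using gd by (simp add: germ_codim_def)
      show "\<forall>x\<in>V \<inter> ball 0 \<epsilon> - {0}. submersive_at CARD('N) g x" using Vb by auto
    qed (use e in auto)
  next
    case False
    then have near: "\<forall>\<epsilon>1>0. \<exists>z\<in>V \<inter> ball 0 \<epsilon>1. z \<noteq> 0" by blast
    define K where "K = CARD(2 \<times> 'n)"
    obtain en where en: "bij_betw en {0..<K} (UNIV::(2 \<times> 'n) set)"
      using ex_bij_betw_nat_finite[of "UNIV::(2 \<times> 'n) set"] K_def by auto
    define g where "g i x = F x $ fst (en i) $ snd (en i)" for i and x :: "complex^'N"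
    have ent0: "F x = 0 \<longleftrightarrow> (\<forall>i<K. g i x = 0)" for x
    proof
      assume "\<forall>i<K. g i x = 0"
      then have "F x $ a $ b = 0" for a b
      proof -
        have "(a, b) \<in> en ` {0..<K}" using en unfolding bij_betw_def by blast
        then obtain i where "i < K" "en i = (a, b)" by auto
        then show ?thesis using \<open>\<forall>i<K. g i x = 0\<close> g_def by force
      qed
      then show "F x = 0" by (simp add: vec_eq_iff)
    qed (simp add: g_def)
    have subm: "submersive_at K g x" if x: "x \<in> V \<inter> ball 0 \<epsilon>2 - {0}" for x
    proof -
      obtain L where L: "(F has_derivative L) (at x)" "\<forall>M. \<exists>u. L u = M" using surjL[OF x] by blast
      show ?thesis unfolding submersive_at_def
      proof (intro exI[of _ "\<lambda>i h. L h $ fst (en i) $ snd (en i)"] conjI)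
        show "\<forall>i<K. (g i has_derivative (\<lambda>h. L h $ fst (en i) $ snd (en i))) (at x)"
          unfolding g_def using entry_deriv[OF L(1)] by blast
        show "\<forall>w::nat \<Rightarrow> complex. \<exists>v. \<forall>i<K. L v $ fst (en i) $ snd (en i) = w i"
        proof
        fix w :: "nat \<Rightarrow> complex"
        define M where "M = (\<chi> a b. w (inv_into {0..<K} en (a, b)))"
        obtain u where u: "L u = M" using L(2) by blast
        have "\<forall>i<K. L u $ fst (en i) $ snd (en i) = w i"
          using en unfolding u M_def bij_betw_def by (auto simp: inv_into_f_f)
        then show "\<exists>v. \<forall>i<K. L v $ fst (en i) $ snd (en i) = w i" by blast
        qed
      qed
    qed
    have holog: "holo_on S (g i)" if "S \<subseteq> U" for S i
    proof -
      have "g i = (\<lambda>x. F x $ fst (en i) $ snd (en i))" by (rule ext) (simp add: g_def)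
      moreover have "holo_on U (\<lambda>x. F x $ fst (en i) $ snd (en i))"
        using assms(4) unfolding holo_mat_on_def by blast
      ultimately show ?thesis using holo_subset that by metis
    qed
    obtain z0 where z0: "z0 \<in> V \<inter> ball 0 \<epsilon>2" "z0 \<noteq> 0" using near[rule_format, OF e2(1)] by blast
    have "z0 \<in> V \<inter> ball 0 \<epsilon>2 - {0}" using z0 by blast
    from submersive_le[OF subm[OF this]] have KN: "K \<le> CARD('N)" .
    have regK: "regular_pt V z (CARD('N) - K)" if z: "z \<in> V \<inter> ball 0 \<epsilon>2 - {0}" for z
    proof (rule regular_of[where U'="ball 0 \<epsilon>2 - {0}" and g=g])
      show "V \<inter> (ball 0 \<epsilon>2 - {0}) = {w \<in> ball 0 \<epsilon>2 - {0}. \<forall>i<K. g i w = 0}"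
        using ent0 e2 V_def by auto
      show "\<forall>i<K. holo_on (ball 0 \<epsilon>2 - {0}) (g i)" using holog e2 by blast
      show "\<forall>w\<in>V \<inter> (ball 0 \<epsilon>2 - {0}). submersive_at K g w" using subm by blast
    qed (use z KN in auto)
    have gd: "germ_dim V = CARD('N) - K"
    proof (rule germ_dim_eq[OF e2(1)])
      show "\<forall>z\<in>V \<inter> ball 0 \<epsilon>2. \<forall>d. regular_pt V z d \<longrightarrow> d \<le> CARD('N) - K"
      proof (intro ballI allI impI)
        fix z d assume z: "z \<in> V \<inter> ball 0 \<epsilon>2" and rd: "regular_pt V z d"
        show "d \<le> CARD('N) - K"
        proof (cases "z = 0")
          case False
          then have zz: "z \<in> V \<inter> ball 0 \<epsilon>2 - {0}" using z by blast
          show ?thesis using regular_unique[OF rd regK[OF zz]] by simp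
        next
          case True
          obtain U' where U': "open U'" "z \<in> U'" "\<forall>w\<in>V \<inter> U'. regular_pt V w d"
            using regular_nbhd[OF rd] by blast
          obtain \<delta> where \<delta>: "\<delta> > 0" "ball 0 \<delta> \<subseteq> U'" using U'(1,2) True openE by blast
          have "min \<delta> \<epsilon>2 > 0" using \<delta> e2 by simp
          then obtain z' where z': "z' \<in> V \<inter> ball 0 (min \<delta> \<epsilon>2)" "z' \<noteq> 0" using near by blast
          have "z' \<in> V \<inter> U'" using z' \<delta> by auto
          then have r1: "regular_pt V z' d" using U'(3) by blast
          have "z' \<in> V \<inter> ball 0 \<epsilon>2 - {0}" using z' by auto
          then have r2: "regular_pt V z' (CARD('N) - K)" by (rule regK)
          show ?thesis using regular_unique[OF r1 r2] by simp
        qed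
      qed
      show "\<forall>\<epsilon>>0. \<exists>z\<in>V \<inter> ball 0 \<epsilon>. regular_pt V z (CARD('N) - K)"
      proof (intro allI impI)
        fix \<epsilon> :: real assume "\<epsilon> > 0"
        then have "min \<epsilon> \<epsilon>2 > 0" using e2 by simp
        then obtain z where z: "z \<in> V \<inter> ball 0 (min \<epsilon> \<epsilon>2)" "z \<noteq> 0" using near by blast
        then have "z \<in> V \<inter> ball 0 \<epsilon>2 - {0}" by auto
        then have "regular_pt V z (CARD('N) - K)" by (rule regK)
        moreover have "z \<in> V \<inter> ball 0 \<epsilon>" using z by auto
        ultimately show "\<exists>z\<in>V \<inter> ball 0 \<epsilon>. regular_pt V z (CARD('N) - K)" by blast
      qed
    qed
    show ?thesis
      unfolding is_ICIS_def
    proof (intro exI[of _ K] exI[of _ g] exI[of _ \<epsilon>2] conjI)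
      show "\<forall>i<K. holo_on (ball 0 \<epsilon>2) (g i) \<and> g i 0 = 0" using holog e2 assms(5) by (auto simp: g_def)
      show "V \<inter> ball 0 \<epsilon>2 = {x \<in> ball 0 \<epsilon>2. \<forall>i<K. g i x = 0}"
        using ent0 e2 V_def by auto
      show "germ_codim V = K" using gd KN by (simp add: germ_codim_def)
      show "\<forall>x\<in>V \<inter> ball 0 \<epsilon>2 - {0}. submersive_at K g x" using subm by blast
    qed (use e2 in auto)
  qed
qed

end
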